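(* Let $\alpha\in\{\frac13,\frac12\}$. For any two BISO channels $W_1:X\mapsto Y_1$ and $W_2:X\mapsto Y_2$ with the same $\alpha$-capacity, $W_1$ is $\alpha$-more capable than $W_2$ and $W_2$ is $\alpha$-more capable than $W_1$.
   Context: A binary input symmetric output (BISO) channel has input alphabet $\{0,1\}$ and a finite output alphabet $\{0,\pm1,\dots,\pm l\}$ with $P_{Y|X}(y|0)=P_{Y|X}(-y|1)$ for all $y$. Sibson's Rényi mutual information of an input distribution $P_X$ on $\{0,1\}$ and channel $P_{Y|X}$ is $I^S_\alpha(X:Y)=\frac{\alpha}{\alpha-1}\log\sum_y\big(\sum_x P_X(x)P_{Y|X}(y|x)^\alpha\big)^{1/\alpha}$; the $\alpha$-capacity is $C_\alpha(P_{Y|X})=\sup_{P_X}I^S_\alpha(X:Y)$. A channel $W_1:X\mapsto Y_1$ is $\alpha$-more capable than $W_2:X\mapsto Y_2$ if $I^S_\alpha(X:Y_1)\ge I^S_\alpha(X:Y_2)$ for every input distribution $P_X$. *)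

theory Defs
  imports Complex_Main
begin

text \<open>Input alphabet {0,1} (as nat), output alphabet {-l..l} (as int).
  A channel is a transition function W y x = P(y|x).\<close>

definition out_alph :: "nat \<Rightarrow> int set" where
  "out_alph l = {- int l .. int l}"

definition is_BISO :: "nat \<Rightarrow> (int \<Rightarrow> nat \<Rightarrow> real) \<Rightarrow> bool" where
  "is_BISO l W \<longleftrightarrow>
     (\<forall>x\<in>{0,1}. (\<forall>y\<in>out_alph l. W y x \<ge> 0) \<and> (\<Sum>y\<in>out_alph l. W y x) = 1) \<and>
     (\<forall>y\<in>out_alph l. W y 0 = W (- y) 1)"

definition input_dist :: "(nat \<Rightarrow> real) \<Rightarrow> bool" where
  "input_dist P \<longleftrightarrow> P 0 \<ge> 0 \<and> P 1 \<ge> 0 \<and> P 0 + P 1 = 1"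

definition sibson_MI :: "real \<Rightarrow> (nat \<Rightarrow> real) \<Rightarrow> nat \<Rightarrow> (int \<Rightarrow> nat \<Rightarrow> real) \<Rightarrow> real" where
  "sibson_MI \<alpha> P l W =
     \<alpha> / (\<alpha> - 1) * ln (\<Sum>y\<in>out_alph l. (\<Sum>x\<in>{0::nat,1}. P x * W y x powr \<alpha>) powr (1 / \<alpha>))"

definition alpha_capacity :: "real \<Rightarrow> nat \<Rightarrow> (int \<Rightarrow> nat \<Rightarrow> real) \<Rightarrow> real" where
  "alpha_capacity \<alpha> l W = (SUP P\<in>{P. input_dist P}. sibson_MI \<alpha> P l W)"

definition alpha_more_capable ::
  "real \<Rightarrow> nat \<Rightarrow> (int \<Rightarrow> nat \<Rightarrow> real) \<Rightarrow> nat \<Rightarrow> (int \<Rightarrow> nat \<Rightarrow> real) \<Rightarrow> bool" where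
  "alpha_more_capable \<alpha> l1 W1 l2 W2 \<longleftrightarrow>
     (\<forall>P. input_dist P \<longrightarrow> sibson_MI \<alpha> P l1 W1 \<ge> sibson_MI \<alpha> P l2 W2)"

end

theory Submission
  imports Defs
begin

lemma cube_pw: "0 \<le> (x::real) \<Longrightarrow> (x powr (1/3)) ^ 3 = x"
  by (metis powr_numeral powr_ge_zero powr_powr powr_one
      divide_real_def mult.commute mult_1 numeral_One right_inverse zero_neq_numeral of_nat_numeral)

lemma sq_pw: "0 \<le> (x::real) \<Longrightarrow> (x powr (1/2)) ^ 2 = x"
  by (simp add: powr_half_sqrt)

lemma BISO_facts:
  assumes "is_BISO l W"
  shows "\<And>y. y \<in> out_alph l \<Longrightarrow> W y 0 \<ge> 0" "\<And>y. y \<in> out_alph l \<Longrightarrow> W y 1 \<ge> 0"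
    "(\<Sum>y\<in>out_alph l. W y 0) = 1" "(\<Sum>y\<in>out_alph l. W y 1) = 1"
    "\<And>y. y \<in> out_alph l \<Longrightarrow> W y 0 = W (-y) 1"
  using assms unfolding is_BISO_def by auto

lemma alg2: assumes "a + b = (1::real)" shows "a^2 * 1 + b^2 * 1 + 2*(a*b)*B = 1 - (1/(1/2))*(a*b)*(1-B)"
proof -
  have "a^2 * 1 + b^2 * 1 + 2*(a*b)*B = (a+b)^2 - 2*(a*b)*(1-B)" by (simp add: power2_eq_square algebra_simps)
  then show ?thesis using assms by simp
qed

lemma alg3: assumes "a + b = (1::real)" shows "a^3 * 1 + b^3 * 1 + 3*a^2*b*S + 3*a*b^2*S = 1 - (1/(1/3))*(a*b)*(1-S)"
proof -
  have "a^3 * 1 + b^3 * 1 + 3*a^2*b*S + 3*a*b^2*S = (a+b)^3 - 3*(a*b)*(a+b)*(1-S)" by (simp add: power2_eq_square power3_eq_cube algebra_simps)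
  then show ?thesis using assms by simp
qed

lemma half_formula:
  assumes W: "is_BISO l W" and P: "input_dist P"
  defines "B \<equiv> (\<Sum>y\<in>out_alph l. W y 0 powr (1/2) * W y 1 powr (1/2))"
  shows "sibson_MI (1/2) P l W = (1/2) / (1/2 - 1) * ln (1 - (1/(1/2)) * (P 0 * P 1) * (1 - B))"
    and "0 \<le> 1 - B" "1 - B \<le> 1"
proof -
  note F = BISO_facts[OF W]
  have p: "P 0 \<ge> 0" "P 1 \<ge> 0" "P 0 + P 1 = 1" using P unfolding input_dist_def by auto
  have trm: "(\<Sum>x\<in>{0::nat,1}. P x * W y x powr (1/2)) powr (1 / (1/2))
      = P 0 ^ 2 * W y 0 + P 1 ^ 2 * W y 1 + 2 * (P 0 * P 1) * (W y 0 powr (1/2) * W y 1 powr (1/2))"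
    if y: "y \<in> out_alph l" for y
  proof -
    have "(\<Sum>x\<in>{0::nat,1}. P x * W y x powr (1/2)) = P 0 * W y 0 powr (1/2) + P 1 * W y 1 powr (1/2)"
      by simp
    moreover have "0 \<le> P 0 * W y 0 powr (1/2) + P 1 * W y 1 powr (1/2)" using p by simp
    ultimately have "(\<Sum>x\<in>{0::nat,1}. P x * W y x powr (1/2)) powr (1 / (1/2))
       = (P 0 * W y 0 powr (1/2) + P 1 * W y 1 powr (1/2)) ^ 2" by simp
    also have "\<dots> = P 0 ^ 2 * (W y 0 powr (1/2))^2 + P 1 ^ 2 * (W y 1 powr (1/2))^2
        + 2 * (P 0 * P 1) * (W y 0 powr (1/2) * W y 1 powr (1/2))"
      by (simp add: power2_eq_square algebra_simps)
    also have "\<dots> = P 0 ^ 2 * W y 0 + P 1 ^ 2 * W y 1 + 2 * (P 0 * P 1) * (W y 0 powr (1/2) * W y 1 powr (1/2))"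
      using F(1)[OF y] F(2)[OF y] by (simp add: sq_pw)
    finally show ?thesis .
  qed
  have "(\<Sum>y\<in>out_alph l. (\<Sum>x\<in>{0::nat,1}. P x * W y x powr (1/2)) powr (1 / (1/2)))
     = (\<Sum>y\<in>out_alph l. P 0 ^ 2 * W y 0 + P 1 ^ 2 * W y 1 + 2 * (P 0 * P 1) * (W y 0 powr (1/2) * W y 1 powr (1/2)))"
    using trm by (rule sum.cong[OF refl])
  also have "\<dots> = P 0 ^ 2 * (\<Sum>y\<in>out_alph l. W y 0) + P 1 ^ 2 * (\<Sum>y\<in>out_alph l. W y 1) + 2 * (P 0 * P 1) * B"
    by (simp add: B_def sum.distrib sum_distrib_left)
  also have "\<dots> = 1 - (1/(1/2)) * (P 0 * P 1) * (1 - B)"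
    unfolding F(3,4) by (rule alg2[OF p(3)])
  finally show "sibson_MI (1/2) P l W = (1/2) / (1/2 - 1) * ln (1 - (1/(1/2)) * (P 0 * P 1) * (1 - B))"
    unfolding sibson_MI_def by simp
  have amgm: "W y 0 powr (1/2) * W y 1 powr (1/2) \<le> (W y 0 + W y 1) / 2" if y: "y \<in> out_alph l" for y
  proof -
    define u where "u = W y 0 powr (1/2)"
    define v where "v = W y 1 powr (1/2)"
    have "u * v \<le> (u^2 + v^2)/2" using sum_squares_ge_zero[of "u - v" 0]
      by (simp add: power2_eq_square algebra_simps)
    then show ?thesis using F(1)[OF y] F(2)[OF y] by (simp add: u_def v_def sq_pw)
  qed
  have "B \<le> (\<Sum>y\<in>out_alph l. (W y 0 + W y 1) / 2)" unfolding B_def by (rule sum_mono) (rule amgm)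
  also have "\<dots> = 1" using F(3,4) by (simp add: sum.distrib sum_divide_distrib[symmetric])
  finally show "0 \<le> 1 - B" by simp
  have "0 \<le> B" unfolding B_def by (intro sum_nonneg) simp
  then show "1 - B \<le> 1" by simp
qed

lemma sum_neg_out: "(\<Sum>y\<in>out_alph l. g (- y)) = (\<Sum>y\<in>out_alph l. (g y :: real))"
proof -
  have im: "uminus ` out_alph l = out_alph l"
  proof
    show "uminus ` out_alph l \<subseteq> out_alph l" by (auto simp: out_alph_def)
    show "out_alph l \<subseteq> uminus ` out_alph l"
    proof
      fix y assume "y \<in> out_alph l"
      then have "-y \<in> out_alph l" "y = - (-y)" by (auto simp: out_alph_def)
      then show "y \<in> uminus ` out_alph l" by blast
    qed
  qed
  have "(\<Sum>y\<in>uminus ` out_alph l. g y) = (\<Sum>y\<in>out_alph l. g (- y))"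
    using sum.reindex[of uminus "out_alph l" g] by (simp add: inj_on_def o_def)
  then show ?thesis using im by simp
qed

lemma third_formula:
  assumes W: "is_BISO l W" and P: "input_dist P"
  defines "S \<equiv> (\<Sum>y\<in>out_alph l. (W y 0 powr (1/3))^2 * W y 1 powr (1/3))"
  shows "sibson_MI (1/3) P l W = (1/3) / (1/3 - 1) * ln (1 - (1/(1/3)) * (P 0 * P 1) * (1 - S))"
    and "0 \<le> 1 - S" "1 - S \<le> 1"
proof -
  note F = BISO_facts[OF W]
  have p: "P 0 \<ge> 0" "P 1 \<ge> 0" "P 0 + P 1 = 1" using P unfolding input_dist_def by auto
  have trm: "(\<Sum>x\<in>{0::nat,1}. P x * W y x powr (1/3)) powr (1 / (1/3))
      = P 0 ^ 3 * W y 0 + P 1 ^ 3 * W y 1 + 3 * P 0 ^ 2 * P 1 * ((W y 0 powr (1/3))^2 * W y 1 powr (1/3))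
        + 3 * P 0 * P 1 ^ 2 * (W y 0 powr (1/3) * (W y 1 powr (1/3))^2)"
    if y: "y \<in> out_alph l" for y
  proof -
    have "(\<Sum>x\<in>{0::nat,1}. P x * W y x powr (1/3)) = P 0 * W y 0 powr (1/3) + P 1 * W y 1 powr (1/3)"
      by simp
    moreover have "0 \<le> P 0 * W y 0 powr (1/3) + P 1 * W y 1 powr (1/3)" using p by simp
    ultimately have "(\<Sum>x\<in>{0::nat,1}. P x * W y x powr (1/3)) powr (1 / (1/3))
       = (P 0 * W y 0 powr (1/3) + P 1 * W y 1 powr (1/3)) ^ 3" by simp
    also have "\<dots> = P 0 ^ 3 * (W y 0 powr (1/3))^3 + P 1 ^ 3 * (W y 1 powr (1/3))^3
        + 3 * P 0 ^ 2 * P 1 * ((W y 0 powr (1/3))^2 * W y 1 powr (1/3))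
        + 3 * P 0 * P 1 ^ 2 * (W y 0 powr (1/3) * (W y 1 powr (1/3))^2)"
      by (simp add: power2_eq_square power3_eq_cube algebra_simps)
    also have "\<dots> = P 0 ^ 3 * W y 0 + P 1 ^ 3 * W y 1 + 3 * P 0 ^ 2 * P 1 * ((W y 0 powr (1/3))^2 * W y 1 powr (1/3))
        + 3 * P 0 * P 1 ^ 2 * (W y 0 powr (1/3) * (W y 1 powr (1/3))^2)"
      using F(1)[OF y] F(2)[OF y] by (simp add: cube_pw)
    finally show ?thesis .
  qed
  have sym: "(\<Sum>y\<in>out_alph l. W y 0 powr (1/3) * (W y 1 powr (1/3))^2) = S"
  proof -
    have "(\<Sum>y\<in>out_alph l. W y 0 powr (1/3) * (W y 1 powr (1/3))^2)
        = (\<Sum>y\<in>out_alph l. (W (-y) 0 powr (1/3))^2 * W (-y) 1 powr (1/3))"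
    proof (rule sum.cong[OF refl])
      fix y assume y: "y \<in> out_alph l"
      then have my: "-y \<in> out_alph l" by (auto simp: out_alph_def)
      have "W (-y) 0 = W y 1" using F(5)[OF my] by simp
      moreover have "W (-y) 1 = W y 0" using F(5)[OF y] by simp
      ultimately show "W y 0 powr (1/3) * (W y 1 powr (1/3))^2 = (W (-y) 0 powr (1/3))^2 * W (-y) 1 powr (1/3)"
        by simp
    qed
    also have "\<dots> = S" unfolding S_def
      by (rule sum_neg_out[where g = "\<lambda>y. (W y 0 powr (1/3))^2 * W y 1 powr (1/3)"])
    finally show ?thesis .
  qed
  have "(\<Sum>y\<in>out_alph l. (\<Sum>x\<in>{0::nat,1}. P x * W y x powr (1/3)) powr (1 / (1/3)))
     = (\<Sum>y\<in>out_alph l. P 0 ^ 3 * W y 0 + P 1 ^ 3 * W y 1 + 3 * P 0 ^ 2 * P 1 * ((W y 0 powr (1/3))^2 * W y 1 powr (1/3))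
        + 3 * P 0 * P 1 ^ 2 * (W y 0 powr (1/3) * (W y 1 powr (1/3))^2))"
    using trm by (rule sum.cong[OF refl])
  also have "\<dots> = P 0 ^ 3 * (\<Sum>y\<in>out_alph l. W y 0) + P 1 ^ 3 * (\<Sum>y\<in>out_alph l. W y 1)
      + 3 * P 0 ^ 2 * P 1 * S + 3 * P 0 * P 1 ^ 2 * (\<Sum>y\<in>out_alph l. W y 0 powr (1/3) * (W y 1 powr (1/3))^2)"
    by (simp add: S_def sum.distrib sum_distrib_left)
  also have "\<dots> = 1 - (1/(1/3)) * (P 0 * P 1) * (1 - S)"
    unfolding F(3,4) sym by (rule alg3[OF p(3)])
  finally show "sibson_MI (1/3) P l W = (1/3) / (1/3 - 1) * ln (1 - (1/(1/3)) * (P 0 * P 1) * (1 - S))"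
    unfolding sibson_MI_def by simp
  have amgm: "(W y 0 powr (1/3))^2 * W y 1 powr (1/3) \<le> (2 * W y 0 + W y 1) / 3" if y: "y \<in> out_alph l" for y
  proof -
    define u where "u = W y 0 powr (1/3)"
    define v where "v = W y 1 powr (1/3)"
    have uv: "u \<ge> 0" "v \<ge> 0" by (simp_all add: u_def v_def)
    have "0 \<le> (u - v)^2 * (2*u + v)" using uv by simp
    then have "u^2 * v \<le> (2 * u^3 + v^3)/3"
      by (simp add: power2_eq_square power3_eq_cube algebra_simps)
    then show ?thesis using F(1)[OF y] F(2)[OF y] by (simp add: u_def v_def cube_pw)
  qed
  have "S \<le> (\<Sum>y\<in>out_alph l. (2 * W y 0 + W y 1) / 3)" unfolding S_def by (rule sum_mono) (rule amgm)
  also have "\<dots> = 1" using F(3,4) by (simp add: sum.distrib sum_divide_distrib[symmetric] sum_distrib_left[symmetric])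
  finally show "0 \<le> 1 - S" by simp
  have "0 \<le> S" unfolding S_def by (intro sum_nonneg) simp
  then show "1 - S \<le> 1" by simp
qed

lemma alpha_facts:
  assumes a: "\<alpha> \<in> {1/3, 1/2::real}"
  shows "1/\<alpha> > 0" "1/\<alpha> \<le> 3" "\<alpha> / (\<alpha> - 1) < 0" "\<alpha> < 1"
proof -
  from a have "\<alpha> = 1/3 \<or> \<alpha> = 1/2" by simp
  then show "1/\<alpha> > 0" "1/\<alpha> \<le> 3" "\<alpha> / (\<alpha> - 1) < 0" "\<alpha> < 1"
    by (elim disjE; hypsubst_thin; simp)+
qed

lemma MI_form:
  assumes a: "\<alpha> \<in> {1/3, 1/2}" and W: "is_BISO l W"
  shows "\<exists>D. 0 \<le> D \<and> D \<le> 1 \<and> (\<forall>P. input_dist P \<longrightarrow>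
           sibson_MI \<alpha> P l W = \<alpha> / (\<alpha> - 1) * ln (1 - (1/\<alpha>) * (P 0 * P 1) * D))"
proof (cases "\<alpha> = 1/3")
  case True
  have hA: "input_dist (\<lambda>_. 1/2)" by (simp add: input_dist_def)
  show ?thesis unfolding True
    apply (rule exI[where x = "1 - (\<Sum>y\<in>out_alph l. (W y 0 powr (1/3))^2 * W y 1 powr (1/3))"])
    using third_formula[OF W] third_formula(2,3)[OF W hA] True by auto
next
  case False
  then have "\<alpha> = 1/2" using a by simp
  have hA: "input_dist (\<lambda>_. 1/2)" by (simp add: input_dist_def)
  show ?thesis unfolding \<open>\<alpha> = 1/2\<close>
    apply (rule exI[where x = "1 - (\<Sum>y\<in>out_alph l. W y 0 powr (1/2) * W y 1 powr (1/2))"])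
    using half_formula[OF W] half_formula(2,3)[OF W hA] \<open>\<alpha> = 1/2\<close> by auto
qed

lemma cap_form:
  assumes a: "\<alpha> \<in> {1/3, 1/2}" and D: "0 \<le> D" "D \<le> 1"
    and MI: "\<forall>P. input_dist P \<longrightarrow> sibson_MI \<alpha> P l W = \<alpha> / (\<alpha> - 1) * ln (1 - (1/\<alpha>) * (P 0 * P 1) * D)"
  shows "alpha_capacity \<alpha> l W = \<alpha> / (\<alpha> - 1) * ln (1 - (1/\<alpha>) * (1/4) * D)"
proof -
  have k: "1/\<alpha> > 0" "1/\<alpha> \<le> 3" "\<alpha> / (\<alpha> - 1) < 0" using alpha_facts[OF a] by auto
  define h where "h = (\<lambda>_::nat. 1/2::real)"
  have hA: "input_dist h" by (simp add: h_def input_dist_def)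
  have hv: "sibson_MI \<alpha> h l W = \<alpha> / (\<alpha> - 1) * ln (1 - (1/\<alpha>) * (1/4) * D)"
  proof -
    have "sibson_MI \<alpha> h l W = \<alpha> / (\<alpha> - 1) * ln (1 - (1/\<alpha>) * (h 0 * h 1) * D)" using MI hA by blast
    moreover have "h 0 * h 1 = 1/4" by (simp add: h_def)
    ultimately show ?thesis by (simp only:)
  qed
  have pos: "0 < 1 - (1/\<alpha>) * (1/4) * D"
  proof -
    have "(1/\<alpha>) * D \<le> 3 * 1" using k D by (intro mult_mono) auto
    then show ?thesis by simp
  qed
  have le: "sibson_MI \<alpha> P l W \<le> \<alpha> / (\<alpha> - 1) * ln (1 - (1/\<alpha>) * (1/4) * D)"
    if P: "input_dist P" for P
  proof -
    have p: "P 0 \<ge> 0" "P 1 \<ge> 0" "P 0 + P 1 = 1" using P unfolding input_dist_def by auto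
    have t: "P 0 * P 1 \<le> 1/4"
    proof -
      have "0 \<le> (P 0 - P 1)^2" by simp
      then have "4 * (P 0 * P 1) \<le> (P 0 + P 1)^2" by (simp add: power2_eq_square algebra_simps)
      then show ?thesis using p by simp
    qed
    have "(1/\<alpha>) * (P 0 * P 1) * D \<le> (1/\<alpha>) * (1/4) * D"
      using k D t by (intro mult_right_mono mult_left_mono) auto
    then have "ln (1 - (1/\<alpha>) * (1/4) * D) \<le> ln (1 - (1/\<alpha>) * (P 0 * P 1) * D)"
      using pos by (intro ln_mono) auto
    then have "\<alpha> / (\<alpha> - 1) * ln (1 - (1/\<alpha>) * (P 0 * P 1) * D) \<le> \<alpha> / (\<alpha> - 1) * ln (1 - (1/\<alpha>) * (1/4) * D)"
      using k by (intro mult_left_mono_neg) auto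
    then show ?thesis using MI P by simp
  qed
  show ?thesis unfolding alpha_capacity_def
  proof (rule cSup_eq_maximum)
    show "\<alpha> / (\<alpha> - 1) * ln (1 - (1/\<alpha>) * (1/4) * D) \<in> (\<lambda>P. sibson_MI \<alpha> P l W) ` {P. input_dist P}"
      by (rule image_eqI[where x = h and f = "\<lambda>P. sibson_MI \<alpha> P l W", OF hv[symmetric]]) (simp add: hA)
    show "\<And>x. x \<in> (\<lambda>P. sibson_MI \<alpha> P l W) ` {P. input_dist P} \<Longrightarrow> x \<le> \<alpha> / (\<alpha> - 1) * ln (1 - (1/\<alpha>) * (1/4) * D)"
      using le by auto
  qed
qed

theorem corollary1:
  fixes \<alpha> :: real and l1 l2 :: nat and W1 W2 :: "int \<Rightarrow> nat \<Rightarrow> real"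
  assumes "\<alpha> \<in> {1/3, 1/2}"
    and "is_BISO l1 W1" and "is_BISO l2 W2"
    and "alpha_capacity \<alpha> l1 W1 = alpha_capacity \<alpha> l2 W2"
  shows "alpha_more_capable \<alpha> l1 W1 l2 W2 \<and> alpha_more_capable \<alpha> l2 W2 l1 W1"
proof -
  obtain D1 where D1: "0 \<le> D1" "D1 \<le> 1" and M1: "\<forall>P. input_dist P \<longrightarrow>
           sibson_MI \<alpha> P l1 W1 = \<alpha> / (\<alpha> - 1) * ln (1 - (1/\<alpha>) * (P 0 * P 1) * D1)"
    using MI_form[OF assms(1,2)] by blast
  obtain D2 where D2: "0 \<le> D2" "D2 \<le> 1" and M2: "\<forall>P. input_dist P \<longrightarrow>
           sibson_MI \<alpha> P l2 W2 = \<alpha> / (\<alpha> - 1) * ln (1 - (1/\<alpha>) * (P 0 * P 1) * D2)"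
    using MI_form[OF assms(1,3)] by blast
  have k: "1/\<alpha> > 0" "1/\<alpha> \<le> 3" "\<alpha> / (\<alpha> - 1) < 0" "\<alpha> < 1" using alpha_facts[OF assms(1)] by auto
  have pos: "0 < 1 - (1/\<alpha>) * (1/4) * D" if "0 \<le> D" "D \<le> 1" for D
  proof -
    have "(1/\<alpha>) * D \<le> 3 * 1" using k that by (intro mult_mono) auto
    then show ?thesis by simp
  qed
  have "\<alpha> / (\<alpha> - 1) * ln (1 - (1/\<alpha>) * (1/4) * D1) = \<alpha> / (\<alpha> - 1) * ln (1 - (1/\<alpha>) * (1/4) * D2)"
    using cap_form[OF assms(1) D1 M1] cap_form[OF assms(1) D2 M2] assms(4) by metis
  then have "ln (1 - (1/\<alpha>) * (1/4) * D1) = ln (1 - (1/\<alpha>) * (1/4) * D2)" using k by simp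
  then have "1 - (1/\<alpha>) * (1/4) * D1 = 1 - (1/\<alpha>) * (1/4) * D2"
    using pos[OF D1] pos[OF D2] by simp
  then have "D1 = D2" using k by simp
  then have "\<forall>P. input_dist P \<longrightarrow> sibson_MI \<alpha> P l1 W1 = sibson_MI \<alpha> P l2 W2" using M1 M2 by simp
  then show ?thesis unfolding alpha_more_capable_def by simp
qed

end
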